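(* In the $\mathsf{CD}^\star$ model, there is a deterministic algorithm that computes a $(2,\log N)$-ruling set of the network using $O(N)$ time and $O(\log N)$ energy, and using only 1-bit messages.
   Context: Radio network: connected undirected graph $G$; synchronized slots; each vertex transmits, listens or idles per slot, transmit/listen costing one unit of energy (energy = maximum per-vertex number of such slots). The $\mathsf{CD}^\star$ model: a listener hears silence if no neighbor transmits, and if at least one neighbor transmits it receives the message of one of the transmitting neighbors (arbitrarily chosen if several transmit). Deterministic setting: vertices have distinct IDs in $\{1,\ldots,N\}$. An $(\alpha,\beta)$-ruling set of $G$ is a set $I$ of vertices such that (i) $\mathrm{dist}(u,v)\ge\alpha$ for all distinct $u,v\in I$, and (ii) for every vertex $u$ there is $v\in I$ with $\mathrm{dist}(u,v)\le\beta$. *)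

theory Defs
  imports Complex_Main
begin

definition graph_dist :: "(nat \<Rightarrow> nat \<Rightarrow> bool) \<Rightarrow> nat \<Rightarrow> nat \<Rightarrow> nat" where
  "graph_dist E u v = (LEAST k. (E ^^ k) u v)"

definition connected_graph :: "nat set \<Rightarrow> (nat \<Rightarrow> nat \<Rightarrow> bool) \<Rightarrow> bool" where
  "connected_graph V E \<longleftrightarrow> finite V \<and> V \<noteq> {}
     \<and> (\<forall>u v. E u v \<longrightarrow> u \<in> V \<and> v \<in> V)
     \<and> (\<forall>u v. E u v \<longrightarrow> E v u)
     \<and> (\<forall>u. \<not> E u u)
     \<and> (\<forall>u\<in>V. \<forall>v\<in>V. \<exists>k. (E ^^ k) u v)"

definition ruling_set ::
  "nat set \<Rightarrow> (nat \<Rightarrow> nat \<Rightarrow> bool) \<Rightarrow> nat \<Rightarrow> real \<Rightarrow> nat set \<Rightarrow> bool" where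
  "ruling_set V E \<alpha> \<beta> I \<longleftrightarrow> I \<subseteq> V
     \<and> (\<forall>u\<in>I. \<forall>v\<in>I. u \<noteq> v \<longrightarrow> \<alpha> \<le> graph_dist E u v)
     \<and> (\<forall>u\<in>V. \<exists>v\<in>I. real (graph_dist E u v) \<le> \<beta>)"

datatype action = Transmit bool | Listen | Idle

text \<open>Feedback a vertex obtains in a slot: NoFb when transmitting or idling
 (no feedback), Silence or a heard message when listening.\<close>
datatype feedback = NoFb | Silence | Heard bool

text \<open>A deterministic algorithm: each vertex's behaviour is a function of
 N, its own ID, and the history of its own feedback (full-information local state).
 out gives the vertex's decision (None = not yet terminated; Some b = terminated,
 b says whether the vertex is in the ruling set).\<close>
record algorithm =
  act :: "nat \<Rightarrow> nat \<Rightarrow> feedback list \<Rightarrow> action"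
  out :: "nat \<Rightarrow> nat \<Rightarrow> feedback list \<Rightarrow> bool option"

definition halting :: "algorithm \<Rightarrow> bool" where
  "halting A \<longleftrightarrow> (\<forall>N i h f. out A N i h \<noteq> None \<longrightarrow>
      act A N i h = Idle \<and> out A N i (h @ [f]) = out A N i h)"

text \<open>An adversary resolves collisions: given a nonempty set of bits transmitted by
 neighbours of a listener, it selects one of them (arbitrary choice).\<close>
definition valid_adversary :: "(nat \<Rightarrow> nat \<Rightarrow> bool set \<Rightarrow> bool) \<Rightarrow> bool" where
  "valid_adversary sel \<longleftrightarrow> (\<forall>t v M. M \<noteq> {} \<longrightarrow> sel t v M \<in> M)"

definition slot_feedback ::
  "algorithm \<Rightarrow> nat \<Rightarrow> (nat \<Rightarrow> nat) \<Rightarrow> (nat \<Rightarrow> nat \<Rightarrow> bool)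
    \<Rightarrow> (nat \<Rightarrow> nat \<Rightarrow> bool set \<Rightarrow> bool) \<Rightarrow> nat \<Rightarrow> (nat \<Rightarrow> feedback list) \<Rightarrow> nat \<Rightarrow> feedback" where
  "slot_feedback A N ident E sel t H v =
     (case act A N (ident v) (H v) of
        Listen \<Rightarrow>
          (let M = {m. \<exists>u. E v u \<and> act A N (ident u) (H u) = Transmit m}
           in if M = {} then Silence else Heard (sel t v M))
      | _ \<Rightarrow> NoFb)"

primrec hist ::
  "algorithm \<Rightarrow> nat \<Rightarrow> (nat \<Rightarrow> nat) \<Rightarrow> (nat \<Rightarrow> nat \<Rightarrow> bool)
    \<Rightarrow> (nat \<Rightarrow> nat \<Rightarrow> bool set \<Rightarrow> bool) \<Rightarrow> nat \<Rightarrow> nat \<Rightarrow> feedback list" where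
  "hist A N ident E sel 0 = (\<lambda>v. [])"
| "hist A N ident E sel (Suc t) =
     (\<lambda>v. hist A N ident E sel t v @
          [slot_feedback A N ident E sel t (hist A N ident E sel t) v])"

definition energy ::
  "algorithm \<Rightarrow> nat \<Rightarrow> (nat \<Rightarrow> nat) \<Rightarrow> (nat \<Rightarrow> nat \<Rightarrow> bool)
    \<Rightarrow> (nat \<Rightarrow> nat \<Rightarrow> bool set \<Rightarrow> bool) \<Rightarrow> nat \<Rightarrow> nat \<Rightarrow> nat" where
  "energy A N ident E sel T v =
     card {t. t < T \<and> act A N (ident v) (hist A N ident E sel t v) \<noteq> Idle}"

definition valid_ids :: "nat set \<Rightarrow> nat \<Rightarrow> (nat \<Rightarrow> nat) \<Rightarrow> bool" where
  "valid_ids V N ident \<longleftrightarrow> inj_on ident V \<and> ident ` V \<subseteq> {1..N}"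

end

theory Submission imports Defs begin

definition KK :: "nat \<Rightarrow> nat" where "KK N = (LEAST k. N \<le> 2^k)"
definition anc :: "nat \<Rightarrow> nat \<Rightarrow> bool" where "anc x n \<longleftrightarrow> (\<exists>j. x div 2^j = n)"
definition lf :: "nat \<Rightarrow> nat \<Rightarrow> nat" where "lf N i = 2^KK N + (i - 1)"
definition nh :: "feedback list \<Rightarrow> bool" where "nh h \<longleftrightarrow> (\<forall>b. Heard b \<notin> set h)"

definition alg :: algorithm where
 "alg = (| act = (\<lambda>N i h. if length h < 2^KK N - 1 \<and> nh h then
       (if anc (lf N i) (2*(2^KK N - 1 - length h)) then Transmit True
        else if anc (lf N i) (2*(2^KK N - 1 - length h)+1) then Listen else Idle)
     else Idle),
   out = (\<lambda>N i h. if 2^KK N - 1 \<le> length h then Some (nh (take (2^KK N - 1) h)) else None) |)"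

lemma act_alg: "act alg N i h = (if length h < 2^KK N - 1 \<and> nh h then
       (if anc (lf N i) (2*(2^KK N - 1 - length h)) then Transmit True
        else if anc (lf N i) (2*(2^KK N - 1 - length h)+1) then Listen else Idle)
     else Idle)" by (simp add: alg_def)

lemma out_alg: "out alg N i h = (if 2^KK N - 1 \<le> length h then Some (nh (take (2^KK N - 1) h)) else None)"
  by (simp add: alg_def)

lemma halting_alg: "halting alg"
  unfolding halting_def act_alg out_alg by auto

lemma length_hist[simp]: "length (hist A N ident E sel t v) = t"
  by (induction t) auto

lemma nh_append: "nh (h @ [f]) \<longleftrightarrow> nh h \<and> (\<forall>b. f \<noteq> Heard b)"
  unfolding nh_def by auto

lemma nh_hist_Suc:
  "nh (hist A N ident E sel (Suc t) v) \<longleftrightarrow> nh (hist A N ident E sel t v) \<and>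
     \<not> (act A N (ident v) (hist A N ident E sel t v) = Listen \<and>
        (\<exists>u m. E v u \<and> act A N (ident u) (hist A N ident E sel t u) = Transmit m))"
proof -
  have "(\<forall>b. slot_feedback A N ident E sel t (hist A N ident E sel t) v \<noteq> Heard b) \<longleftrightarrow>
     \<not> (act A N (ident v) (hist A N ident E sel t v) = Listen \<and>
        (\<exists>u m. E v u \<and> act A N (ident u) (hist A N ident E sel t u) = Transmit m))"
    unfolding slot_feedback_def by (cases "act A N (ident v) (hist A N ident E sel t v)") (auto simp: Let_def)
  then show ?thesis by (simp add: nh_append)
qed

function bc :: "nat \<Rightarrow> nat" where "bc x = (if x = 0 then 0 else x mod 2 + bc (x div 2))"
  by auto
termination by (relation "measure id") auto
declare bc.simps[simp del]

lemma bc_2n: "bc (2*n) = bc n"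
  by (cases "n = 0") (subst bc.simps, simp)+

lemma bc_2n1: "bc (2*n+1) = bc n + 1"
  by (subst bc.simps) simp

lemma bc_div2: "bc (x div 2) \<le> bc x"
  by (cases "x = 0") (simp, subst (2) bc.simps, simp)

lemma bc_div: "bc (x div 2^j) \<le> bc x"
proof (induction j)
  case (Suc j)
  have "x div 2^Suc j = (x div 2^j) div 2" by (simp add: div_mult2_eq mult.commute[of 2])
  then show ?case using bc_div2[of "x div 2^j"] Suc by simp
qed simp

lemma bc_pow: "x < 2^k \<Longrightarrow> bc (2^k + x) = bc x + 1"
proof (induction k arbitrary: x)
  case 0 then show ?case by (simp add: bc.simps)
next
  case (Suc k)
  have x2: "x div 2 < 2^k" using Suc.prems by simp
  have "bc (2^Suc k + x) = (2^Suc k + x) mod 2 + bc ((2^Suc k + x) div 2)"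
    by (subst bc.simps) simp
  also have "(2^Suc k + x) div 2 = 2^k + x div 2" by simp
  also have "(2^Suc k + x) mod 2 = x mod 2" by simp
  finally show ?case using Suc.IH[OF x2]
    by (cases "x = 0") (simp_all add: bc.simps[of x] bc.simps[of 0])
qed

lemma bc_log: "2^(bc x) \<le> x + 1"
proof (induction x rule: less_induct)
  case (less x)
  show ?case
  proof (cases "x = 0")
    case True then show ?thesis by (simp add: bc.simps)
  next
    case False
    then have "bc x = x mod 2 + bc (x div 2)" by (simp add: bc.simps)
    moreover have "2^bc (x div 2) \<le> x div 2 + 1" using less False by simp
    ultimately show ?thesis
      by (cases "x mod 2 = 0") (auto simp: power_add, presburger+)
  qed
qed

lemma div_pow_Suc: "(x::nat) div 2^Suc j = (x div 2^j) div 2"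
  by (simp add: div_mult2_eq mult.commute[of 2])

lemma anc_refl: "anc x x" unfolding anc_def by (rule exI[of _ 0]) simp

lemma anc_up: assumes "anc x (2*n) \<or> anc x (2*n+1)" shows "anc x n"
proof -
  obtain j where "x div 2^j = 2*n \<or> x div 2^j = 2*n+1" using assms anc_def by auto
  then have "x div 2^Suc j = n" unfolding div_pow_Suc by auto
  then show ?thesis unfolding anc_def by blast
qed

lemma anc_split: assumes "anc x n" "n < 2^k" "2^k \<le> x"
  shows "anc x (2*n) \<or> anc x (2*n+1)"
proof -
  obtain j where j: "x div 2^j = n" using assms(1) anc_def by auto
  have "j \<noteq> 0"
  proof
    assume "j = 0" with j assms show False by simp
  qed
  then obtain i where i: "j = Suc i" by (cases j) auto
  have "(x div 2^i) div 2 = n" using j i div_pow_Suc by simp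
  then have "x div 2^i = 2*n \<or> x div 2^i = 2*n+1"
    using div_mult_mod_eq[of "x div 2^i" 2] by (cases "x div 2^i mod 2 = 0") auto
  then show ?thesis unfolding anc_def by blast
qed

lemma anc_cmp: assumes "anc x a" "anc x b" "a \<le> b" shows "\<exists>i. b div 2^i = a"
proof -
  obtain i j where i: "x div 2^i = a" and j: "x div 2^j = b" using assms anc_def by auto
  show ?thesis
  proof (cases "j \<le> i")
    case True
    have "(2::nat)^i = 2^j * 2^(i-j)" using True by (simp add: power_add[symmetric])
    then have "x div 2^i = x div 2^j div 2^(i-j)"
      by (simp add: div_mult2_eq)
    then have "b div 2^(i-j) = a" using i j by simp
    then show ?thesis by blast
  next
    case False
    have "(2::nat)^j = 2^i * 2^(j-i)" using False by (simp add: power_add[symmetric])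
    then have "x div 2^j = x div 2^i div 2^(j-i)"
      by (simp add: div_mult2_eq)
    then have "b \<le> a" using i j by simp
    then have "a = b" using assms by simp
    then show ?thesis by (intro exI[of _ 0]) simp
  qed
qed

lemma anc_bc: "anc x n \<Longrightarrow> bc n \<le> bc x"
  unfolding anc_def using bc_div by auto

lemma div_pow_ge1: "(i::nat) \<noteq> 0 \<Longrightarrow> (m::nat) div 2^i \<le> m div 2"
proof -
  assume "i \<noteq> 0" then obtain l where "i = Suc l" by (cases i) auto
  then have "m div 2^i = (m div 2^l) div 2" using div_pow_Suc[of m l] by simp
  then show ?thesis by (simp add: div_le_mono div_le_dividend)
qed

lemma no_listen: assumes "anc x m" "anc x (2*n'+1)" "m div 2 < n'" "n' < m" shows False
proof (cases "2*n'+1 \<le> m")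
  case True
  then obtain i where i: "m div 2^i = 2*n'+1" using anc_cmp assms by blast
  show False
  proof (cases "i = 0")
    case True then show False using i assms by simp
  next
    case False then show False using div_pow_ge1[OF False, of m] i assms by simp
  qed
next
  case False
  then obtain i where i: "(2*n'+1) div 2^i = m" using anc_cmp assms by fastforce
  show False
  proof (cases "i = 0")
    case True then show False using i assms False by simp
  next
    case F: False then show False using div_pow_ge1[OF F, of "2*n'+1"] i assms by simp
  qed
qed

lemma anc_disj: assumes "anc x (2*n)" "anc x (2*n+1)" "1 \<le> n" shows False
proof -
  obtain i where i: "(2*n+1) div 2^i = 2*n" using anc_cmp[OF assms(1,2)] by auto
  show False
  proof (cases "i = 0")
    case True then show False using i by simp
  next
    case F: False then show False using div_pow_ge1[OF F, of "2*n+1"] i assms by simp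
  qed
qed

locale inst =
  fixes N :: nat and V :: "nat set" and E :: "nat \<Rightarrow> nat \<Rightarrow> bool" and ident :: "nat \<Rightarrow> nat"
    and sel :: "nat \<Rightarrow> nat \<Rightarrow> bool set \<Rightarrow> bool"
  assumes conn: "connected_graph V E" and ids: "valid_ids V N ident" and adv: "valid_adversary sel"
begin

abbreviation "k \<equiv> KK N"
abbreviation "H \<equiv> hist alg N ident E sel"
definition "lv v = lf N (ident v)"
definition "D n = {v\<in>V. anc (lv v) n}"

lemma E_V: "E u v \<Longrightarrow> u \<in> V \<and> v \<in> V" using conn unfolding connected_graph_def by blast
lemma E_sym: "E u v \<Longrightarrow> E v u" using conn unfolding connected_graph_def by blast
lemma reach: "u \<in> V \<Longrightarrow> v \<in> V \<Longrightarrow> \<exists>j. (E ^^ j) u v"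
  using conn unfolding connected_graph_def by blast

lemma id_range: "v \<in> V \<Longrightarrow> 1 \<le> ident v \<and> ident v \<le> N"
  using ids unfolding valid_ids_def by auto

lemma N_pos: "1 \<le> N"
proof -
  obtain v where "v \<in> V" using conn unfolding connected_graph_def by auto
  then show ?thesis using id_range by fastforce
qed

lemma N_le: "N \<le> 2^k"
  unfolding KK_def by (rule LeastI[of _ N]) (simp add: less_imp_le)

lemma lv_bounds: "v \<in> V \<Longrightarrow> 2^k \<le> lv v \<and> lv v < 2^(k+1)"
  using id_range[of v] N_le unfolding lv_def lf_def by auto

lemma lv_inj: "u \<in> V \<Longrightarrow> v \<in> V \<Longrightarrow> lv u = lv v \<Longrightarrow> u = v"
  using id_range[of u] id_range[of v] ids unfolding lv_def lf_def valid_ids_def inj_on_def by auto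

lemma act_H: "act alg N (ident v) (H t v) = (if t < 2^k - 1 \<and> nh (H t v) then
   (if anc (lv v) (2*(2^k-1-t)) then Transmit True
    else if anc (lv v) (2*(2^k-1-t)+1) then Listen else Idle) else Idle)"
  by (simp add: act_alg lv_def)

lemma nh_mono: "t \<le> t' \<Longrightarrow> nh (H t' v) \<Longrightarrow> nh (H t v)"
proof (induction t' rule: dec_induct)
  case (step m) then show ?case using nh_hist_Suc by blast
qed simp

lemma nh_slot: "nh (H (Suc t) v) \<longleftrightarrow> nh (H t v) \<and>
   \<not> (act alg N (ident v) (H t v) = Listen \<and>
      (\<exists>u. E v u \<and> t < 2^k - 1 \<and> nh (H t u) \<and> anc (lv u) (2*(2^k-1-t))))"
  unfolding nh_hist_Suc act_H[of _ u for u] by (auto split: if_splits)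

lemma stab: assumes "v \<in> D m" "2 \<le> m" "m < 2^(k+1)" "2^k - m \<le> t" "t \<le> 2^k - 1 - m div 2"
  shows "nh (H t v) = nh (H (2^k - m) v)"
  using assms(4,5)
proof (induction t)
  case 0 then show ?case by simp
next
  case (Suc t)
  show ?case
  proof (cases "2^k - m = Suc t")
    case True then show ?thesis by simp
  next
    case False
    then have t1: "2^k - m \<le> t" "t \<le> 2^k - 1 - m div 2" using Suc.prems by auto
    have lt: "m div 2 < 2^k - 1 - t" "2^k - 1 - t < m" using Suc.prems t1 by auto
    have am: "anc (lv v) m" using assms(1) D_def by auto
    have "act alg N (ident v) (H t v) \<noteq> Listen"
      using no_listen[OF am _ lt] unfolding act_H by (auto split: if_splits)
    then have "nh (H (Suc t) v) = nh (H t v)" using nh_slot by blast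
    then show ?thesis using Suc.IH t1 by simp
  qed
qed

lemma dist_self: "graph_dist E w w = 0"
  unfolding graph_dist_def by (rule Least_eq_0) simp

lemma dist_step: assumes "w \<in> V" "v \<in> V" "E v u" shows "graph_dist E w u \<le> graph_dist E w v + 1"
proof -
  have "(E ^^ graph_dist E w v) w v" unfolding graph_dist_def using reach[OF assms(1,2)] by (rule LeastI_ex)
  then have "(E ^^ Suc (graph_dist E w v)) w u" using assms(3) by (rule relpowp_Suc_I)
  then show ?thesis unfolding graph_dist_def by (metis Least_le Suc_eq_plus1)
qed

lemma dist_ge2: assumes "u \<in> V" "v \<in> V" "u \<noteq> v" "\<not> E u v" shows "2 \<le> graph_dist E u v"
proof (rule ccontr)
  assume a: "\<not> 2 \<le> graph_dist E u v"
  have "(E ^^ graph_dist E u v) u v" unfolding graph_dist_def using reach[OF assms(1,2)] by (rule LeastI_ex)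
  moreover have "graph_dist E u v = 0 \<or> graph_dist E u v = 1" using a by auto
  ultimately show False using assms by auto
qed

lemma main: assumes "1 \<le> n" "n < 2^(k+1)"
  shows "(\<forall>u\<in>D n. \<forall>v\<in>D n. nh (H (2^k - n) u) \<and> nh (H (2^k - n) v) \<and> u \<noteq> v \<longrightarrow> \<not> E u v) \<and>
         (\<forall>w\<in>D n. \<exists>v\<in>D n. nh (H (2^k - n) v) \<and> graph_dist E w v \<le> bc (lv w) - bc n)"
  using assms
proof (induction "2^(k+1) - n" arbitrary: n rule: less_induct)
  case less
  show ?case
  proof (cases "2^k \<le> n")
    case True
    have leaf: "lv v = n" if vD: "v \<in> D n" for v
    proof -
      obtain j where j: "lv v div 2^j = n" using vD unfolding D_def anc_def by auto
      have b: "2^k \<le> lv v" "lv v < 2^(k+1)" using vD D_def lv_bounds by auto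
      show ?thesis
      proof (cases "j = 0")
        case True then show ?thesis using j by simp
      next
        case False
        then have "lv v div 2^j \<le> lv v div 2" by (rule div_pow_ge1)
        also have "lv v div 2 < 2^k" using b by simp
        finally show ?thesis using j True by simp
      qed
    qed
    have z: "2^k - n = 0" using True by simp
    show ?thesis
    proof (intro conjI ballI impI)
      fix u v assume uv: "u \<in> D n" "v \<in> D n" "nh (H (2^k - n) u) \<and> nh (H (2^k - n) v) \<and> u \<noteq> v"
      have "u \<in> V" "v \<in> V" using uv(1,2) unfolding D_def by auto
      moreover have "lv u = lv v" using leaf[OF uv(1)] leaf[OF uv(2)] by simp
      ultimately have "u = v" by (rule lv_inj)
      then show "\<not> E u v" using uv(3) by simp
    next
      fix w assume "w \<in> D n"
      then show "\<exists>v\<in>D n. nh (H (2^k - n) v) \<and> graph_dist E w v \<le> bc (lv w) - bc n"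
        using z dist_self by (intro bexI[of _ w]) (auto simp: nh_def)
    qed
  next
    case False
    define s where "s = 2^k - 1 - n"
    have sS: "2^k - n = Suc s" "s < 2^k - 1" "2^k - 1 - s = n" using False less.prems unfolding s_def by auto
    have IH0: "(\<forall>u\<in>D (2*n). \<forall>v\<in>D (2*n). nh (H (2^k - 2*n) u) \<and> nh (H (2^k - 2*n) v) \<and> u \<noteq> v \<longrightarrow> \<not> E u v) \<and>
         (\<forall>w\<in>D (2*n). \<exists>v\<in>D (2*n). nh (H (2^k - 2*n) v) \<and> graph_dist E w v \<le> bc (lv w) - bc (2*n))"
    proof (rule less.hyps)
      show "2^(k+1) - (2*n) < 2^(k+1) - n" "1 \<le> 2*n" "2*n < 2^(k+1)"
        using less.prems False by auto
    qed
    have IH1: "(\<forall>u\<in>D (2*n+1). \<forall>v\<in>D (2*n+1). nh (H (2^k - (2*n+1)) u) \<and> nh (H (2^k - (2*n+1)) v) \<and> u \<noteq> v \<longrightarrow> \<not> E u v) \<and>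
         (\<forall>w\<in>D (2*n+1). \<exists>v\<in>D (2*n+1). nh (H (2^k - (2*n+1)) v) \<and> graph_dist E w v \<le> bc (lv w) - bc (2*n+1))"
    proof (rule less.hyps)
      show "2^(k+1) - (2*n+1) < 2^(k+1) - n" "1 \<le> 2*n+1" "2*n+1 < 2^(k+1)"
        using less.prems False by auto
    qed
    have c0: "2 \<le> 2*n" "2*n < 2^(k+1)" "2^k - 2*n \<le> s" "s \<le> 2^k - 1 - (2*n) div 2"
      using less.prems False unfolding s_def by auto
    have c1: "2 \<le> 2*n+1" "2*n+1 < 2^(k+1)" "2^k - (2*n+1) \<le> s" "s \<le> 2^k - 1 - (2*n+1) div 2"
      using less.prems False unfolding s_def by auto
    have st0: "nh (H s v) = nh (H (2^k - 2*n) v)" if "v \<in> D (2*n)" for v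
      by (rule stab[OF that c0])
    have st1: "nh (H s v) = nh (H (2^k - (2*n+1)) v)" if "v \<in> D (2*n+1)" for v
      by (rule stab[OF that c1])
    have tr0: "nh (H (Suc s) v) = nh (H s v)" if "v \<in> D (2*n)" for v
    proof -
      have "act alg N (ident v) (H s v) \<noteq> Listen" using that sS unfolding act_H D_def by auto
      then show ?thesis using nh_slot by blast
    qed
    have tr1: "nh (H (Suc s) v) \<longleftrightarrow> nh (H s v) \<and> \<not> (\<exists>u. E v u \<and> nh (H s u) \<and> u \<in> D (2*n))"
      if "v \<in> D (2*n+1)" for v
    proof -
      have "\<not> anc (lv v) (2*n)" using that anc_disj less.prems unfolding D_def by blast
      then have "act alg N (ident v) (H s v) = Listen \<longleftrightarrow> nh (H s v)" using that sS unfolding act_H D_def by auto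
      then show ?thesis using nh_slot[of s v] sS E_V unfolding D_def by auto
    qed
    have Dn: "D n = D (2*n) \<union> D (2*n+1)"
    proof
      show "D n \<subseteq> D (2*n) \<union> D (2*n+1)"
      proof
        fix v assume "v \<in> D n"
        then have v: "v \<in> V" "anc (lv v) n" by (auto simp: D_def)
        have "anc (lv v) (2*n) \<or> anc (lv v) (2*n+1)"
        proof (rule anc_split[OF v(2)])
          show "n < 2^k" using False by simp
          show "2^k \<le> lv v" using lv_bounds[OF v(1)] by simp
        qed
        then show "v \<in> D (2*n) \<union> D (2*n+1)" using v(1) by (auto simp: D_def)
      qed
      show "D (2*n) \<union> D (2*n+1) \<subseteq> D n"
      proof
        fix v assume "v \<in> D (2*n) \<union> D (2*n+1)"
        then have "v \<in> V" "anc (lv v) (2*n) \<or> anc (lv v) (2*n+1)" unfolding D_def by auto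
        then show "v \<in> D n" using anc_up unfolding D_def by blast
      qed
    qed
    show ?thesis unfolding sS(1)
    proof (intro conjI ballI impI)
      fix u v assume uv: "u \<in> D n" "v \<in> D n" "nh (H (Suc s) u) \<and> nh (H (Suc s) v) \<and> u \<noteq> v"
      have nu: "nh (H s u)" "nh (H s v)" using uv nh_mono[of s "Suc s"] by auto
      show "\<not> E u v"
      proof
        assume e: "E u v"
        consider "u \<in> D (2*n)" "v \<in> D (2*n)" | "u \<in> D (2*n+1)" "v \<in> D (2*n+1)"
          | "u \<in> D (2*n)" "v \<in> D (2*n+1)" | "u \<in> D (2*n+1)" "v \<in> D (2*n)" using uv Dn by blast
        then show False
        proof cases
          case 1 then show False using IH0 e uv nu st0 by blast
        next
          case 2 then show False using IH1 e uv nu st1 by blast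
        next
          case 3 then show False using tr1[of v] uv nu E_sym[OF e] by blast
        next
          case 4 then show False using tr1[of u] uv nu e by blast
        qed
      qed
    next
      fix w assume w: "w \<in> D n"
      then consider "w \<in> D (2*n)" | "w \<in> D (2*n+1)" using Dn by blast
      then show "\<exists>v\<in>D n. nh (H (Suc s) v) \<and> graph_dist E w v \<le> bc (lv w) - bc n"
      proof cases
        case 1
        then obtain v where v: "v \<in> D (2*n)" "nh (H (2^k - 2*n) v)" "graph_dist E w v \<le> bc (lv w) - bc (2*n)"
          using IH0 by blast
        then show ?thesis using Dn st0 tr0 bc_2n by (intro bexI[of _ v]) auto
      next
        case 2
        then obtain v where v: "v \<in> D (2*n+1)" "nh (H (2^k - (2*n+1)) v)" "graph_dist E w v \<le> bc (lv w) - bc (2*n+1)"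
          using IH1 by blast
        have bw: "bc (2*n+1) \<le> bc (lv w)" using 2 anc_bc unfolding D_def by blast
        have nv: "nh (H s v)" using st1 v by simp
        show ?thesis
        proof (cases "nh (H (Suc s) v)")
          case True then show ?thesis using v Dn bw bc_2n1 by (intro bexI[of _ v]) auto
        next
          case False
          then obtain u where u: "E v u" "nh (H s u)" "u \<in> D (2*n)" using tr1[OF v(1)] nv by blast
          have "graph_dist E w u \<le> graph_dist E w v + 1"
            using dist_step[OF _ _ u(1)] w v(1) unfolding D_def by blast
          then show ?thesis using u tr0 Dn v(3) bw bc_2n1[of n] by (intro bexI[of _ u]) auto
        qed
      qed
    qed
  qed
qed

lemma k_small: "2^k \<le> 2*N \<and> real k \<le> log 2 (real N) + 1"
proof (cases "k = 0")
  case True then show ?thesis using N_pos by simp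
next
  case False
  have "\<not> N \<le> 2^(k-1)"
  proof
    assume "N \<le> 2^(k-1)"
    then have "k \<le> k - 1" unfolding KK_def by (rule Least_le)
    then show False using False by simp
  qed
  then have lt: "2^(k-1) \<le> N" by simp
  have "(2::nat)^k = 2 * 2^(k-1)" using False by (cases k) auto
  then have a: "2^k \<le> 2*N" using lt by simp
  have "real (k-1) \<le> log 2 (real N)" using le_log2_of_power[OF lt] by simp
  then show ?thesis using a False by simp
qed

lemma D1: "D 1 = V"
proof -
  have "anc (lv v) 1" if "v \<in> V" for v
  proof -
    have b: "2^k \<le> lv v" "lv v < 2^(k+1)" using lv_bounds[OF that] by auto
    have "lv v div 2^k = 1"
    proof (rule ccontr)
      assume "lv v div 2^k \<noteq> 1"
      then consider "lv v div 2^k = 0" | "lv v div 2^k \<ge> 2" by linarith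
      then show False
      proof cases
        case 1 then show False using b by (simp add: div_eq_0_iff)
      next
        case 2
        then have "2 * 2^k \<le> lv v div 2^k * 2^k" by simp
        also have "\<dots> \<le> lv v" using div_mult_mod_eq[of "lv v" "2^k"] by linarith
        finally show False using b by simp
      qed
    qed
    then show ?thesis unfolding anc_def by blast
  qed
  then show ?thesis unfolding D_def by auto
qed

lemma energy_bound: assumes "v \<in> V" shows "energy alg N ident E sel (2^k - 1) v \<le> k"
proof -
  have sub: "{t. t < 2^k - 1 \<and> act alg N (ident v) (H t v) \<noteq> Idle} \<subseteq> (\<lambda>j. 2^k - 1 - lv v div 2^j) ` {1..k}"
  proof
    fix t assume t: "t \<in> {t. t < 2^k - 1 \<and> act alg N (ident v) (H t v) \<noteq> Idle}"
    define n' where "n' = 2^k - 1 - t"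
    have tl: "t < 2^k - 1" using t by simp
    have "anc (lv v) (2*n') \<or> anc (lv v) (2*n'+1)" using t unfolding act_H n'_def by (auto split: if_splits)
    then have "anc (lv v) n'" by (rule anc_up)
    then obtain j where j: "lv v div 2^j = n'" unfolding anc_def by auto
    have n1: "1 \<le> n'" "n' < 2^k" using tl unfolding n'_def by auto
    have b: "2^k \<le> lv v" "lv v < 2^(k+1)" using lv_bounds[OF assms] by auto
    have j0: "j \<noteq> 0" using j n1 b by (cases "j = 0") auto
    have jk: "j \<le> k"
    proof (rule ccontr)
      assume "\<not> j \<le> k"
      then have "(2::nat)^(k+1) \<le> 2^j" by (intro power_increasing) auto
      then have "lv v div 2^j = 0" using b by (simp add: div_eq_0_iff)
      then show False using j n1 by simp
    qed
    have "t = 2^k - 1 - lv v div 2^j" using j tl unfolding n'_def by simp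
    then show "t \<in> (\<lambda>j. 2^k - 1 - lv v div 2^j) ` {1..k}" using j0 jk by auto
  qed
  have "card {t. t < 2^k - 1 \<and> act alg N (ident v) (H t v) \<noteq> Idle} \<le> card ((\<lambda>j. 2^k - 1 - lv v div 2^j) ` {1..k})"
    by (rule card_mono[OF _ sub]) simp
  also have "\<dots> \<le> card {1..k}" by (rule card_image_le) simp
  finally show ?thesis unfolding energy_def by simp
qed

lemma final: "\<exists>T. real T \<le> 2 * real N
          \<and> (\<forall>v\<in>V. out alg N (ident v) (H T v) \<noteq> None)
          \<and> ruling_set V E 2 (log 2 (real N))
              {v\<in>V. out alg N (ident v) (H T v) = Some True}
          \<and> (\<forall>v\<in>V. real (energy alg N ident E sel T v) \<le> 2 * log 2 (real N) + 2)"
proof (intro exI conjI ballI)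
  let ?T = "2^k - 1"
  show "real ?T \<le> 2 * real N" using k_small by linarith
  fix v assume "v \<in> V"
  then show "out alg N (ident v) (H ?T v) \<noteq> None" by (simp add: out_alg)
next
  let ?T = "2^k - 1"
  fix v assume v: "v \<in> V"
  have "real (energy alg N ident E sel ?T v) \<le> real k" using energy_bound[OF v] by simp
  also have "\<dots> \<le> log 2 (real N) + 1" using k_small by simp
  also have "\<dots> \<le> 2 * log 2 (real N) + 2" using N_pos by simp
  finally show "real (energy alg N ident E sel ?T v) \<le> 2 * log 2 (real N) + 2" .
next
  let ?T = "2^k - 1"
  have I: "{v\<in>V. out alg N (ident v) (H ?T v) = Some True} = {v\<in>V. nh (H ?T v)}"
    by (auto simp: out_alg)
  have M: "(\<forall>u\<in>V. \<forall>v\<in>V. nh (H ?T u) \<and> nh (H ?T v) \<and> u \<noteq> v \<longrightarrow> \<not> E u v) \<and>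
         (\<forall>w\<in>V. \<exists>v\<in>V. nh (H ?T v) \<and> graph_dist E w v \<le> bc (lv w) - bc 1)"
  proof -
    have "(0::nat) < 2^k" by simp
    then have "1 < (2::nat)^(k+1)" by (simp only: power_Suc Suc_eq_plus1[symmetric])
    then show ?thesis using main[of 1] D1 by simp
  qed
  have bc1: "bc 1 = 1" using bc_2n1[of 0] bc.simps[of 0] by simp
  show "ruling_set V E 2 (log 2 (real N)) {v\<in>V. out alg N (ident v) (H ?T v) = Some True}"
    unfolding I ruling_set_def
  proof (intro conjI ballI impI)
    fix u v assume "u \<in> {v\<in>V. nh (H ?T v)}" "v \<in> {v\<in>V. nh (H ?T v)}" "u \<noteq> v"
    then show "2 \<le> graph_dist E u v" using M dist_ge2 by auto
  next
    fix w assume w: "w \<in> V"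
    then obtain v where v: "v \<in> V" "nh (H ?T v)" "graph_dist E w v \<le> bc (lv w) - bc 1" using M by blast
    have x: "ident w - 1 < 2^k" "ident w - 1 + 1 \<le> N" using id_range[OF w] N_le by auto
    have "bc (lv w) = bc (ident w - 1) + 1" unfolding lv_def lf_def by (rule bc_pow[OF x(1)])
    then have d: "graph_dist E w v \<le> bc (ident w - 1)" using v(3) bc1 by simp
    have "2^bc (ident w - 1) \<le> N" using bc_log[of "ident w - 1"] x(2) by linarith
    then have "real (bc (ident w - 1)) \<le> log 2 (real N)" by (rule le_log2_of_power)
    then have "real (graph_dist E w v) \<le> log 2 (real N)" using d by linarith
    then show "\<exists>v\<in>{v\<in>V. nh (H ?T v)}. real (graph_dist E w v) \<le> log 2 (real N)" using v by blast
  qed auto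
qed

end

theorem lemma15:
  shows "\<exists>(A::algorithm) (c::real). halting A \<and>
    (\<forall>N V E ident sel.
       connected_graph V E \<and> valid_ids V N ident \<and> valid_adversary sel \<longrightarrow>
       (\<exists>T. real T \<le> c * real N
          \<and> (\<forall>v\<in>V. out A N (ident v) (hist A N ident E sel T v) \<noteq> None)
          \<and> ruling_set V E 2 (log 2 (real N))
              {v\<in>V. out A N (ident v) (hist A N ident E sel T v) = Some True}
          \<and> (\<forall>v\<in>V. real (energy A N ident E sel T v) \<le> c * log 2 (real N) + c)))"
proof (rule exI[of _ alg], rule exI[of _ 2], intro conjI halting_alg allI impI)
  fix N V E ident sel
  assume "connected_graph V E \<and> valid_ids V N ident \<and> valid_adversary sel"
  then interpret inst N V E ident sel by unfold_locales auto
  show "\<exists>T. real T \<le> 2 * real N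
          \<and> (\<forall>v\<in>V. out alg N (ident v) (hist alg N ident E sel T v) \<noteq> None)
          \<and> ruling_set V E 2 (log 2 (real N))
              {v\<in>V. out alg N (ident v) (hist alg N ident E sel T v) = Some True}
          \<and> (\<forall>v\<in>V. real (energy alg N ident E sel T v) \<le> 2 * log 2 (real N) + 2)"
    using final by simp
qed

end
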